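(* For an arbitrary sequence of instances $\{\mathcal{I}_N\}$ of the binary voting game, let $\Sigma_N$ be a sincere strategy profile in $\mathcal{I}_N$. Then $\lim_{N\to\infty}A(\Sigma_N)=1$ if and only if there is a sequence $\varepsilon_N\to0$ such that for every $N$, $\Sigma_N$ is an $\varepsilon_N$-strong Bayes Nash Equilibrium.
   Context: Binary voting game. An instance has $N$ agents each voting for $\mathbf{A}$ or $\mathbf{R}$. Unobserved world state $W\in\{L,H\}$ with common prior $P_L,P_H>0$. Conditional on $W$, each agent independently receives a signal $S_n\in\{l,h\}$ with $P_{sw}=\Pr[S_n=s\mid W=w]$, $P_{hH}>P_{hL}$, $P_{lH}<P_{lL}$. With threshold $\mu\in(0,1)$, $\mathbf{A}$ wins iff at least $\mu N$ agents vote $\mathbf{A}$, else $\mathbf{R}$ wins. Agent $n$ has utility $v_n:\{L,H\}\times\{\mathbf{A},\mathbf{R}\}\to\{0,\dots,B\}$ ($B$ fixed) with $v_n(H,\mathbf{A})>v_n(L,\mathbf{A})$, $v_n(H,\mathbf{R})<v_n(L,\mathbf{R})$. Every agent is friendly ($v_n(H,\mathbf{A})>v_n(L,\mathbf{A})>v_n(L,\mathbf{R})>v_n(H,\mathbf{R})$), unfriendly ($v_n(L,\mathbf{R})>v_n(H,\mathbf{R})>v_n(H,\mathbf{A})>v_n(L,\mathbf{A})$) or contingent ($v_n(H,\mathbf{A})>v_n(H,\mathbf{R})$, $v_n(L,\mathbf{R})>v_n(L,\mathbf{A})$), with counts $\lfloor\alpha_FN\rfloor$, $\lfloor\alpha_UN\rfloor$,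 rest, for fixed $\alpha$'s summing to 1 with $\alpha_F<\mu$, $\alpha_U<1-\mu$ (informed majority decision: $\mathbf{A}$ in $H$, $\mathbf{R}$ in $L$). A sequence of instances: $\mathcal{I}_N$ has $N$ agents, all share $\mu$, prior, signal distribution, $\alpha$'s; utilities arbitrary. A strategy gives, for each signal, a probability of voting $\mathbf{A}$. Sincere profile: for each agent $n$ and signal $s$, with $u_n(\mathbf{X}\mid s)=\Pr[W=L\mid S_n=s]v_n(L,\mathbf{X})+\Pr[W=H\mid S_n=s]v_n(H,\mathbf{X})$ (posterior by Bayes' rule), agent $n$ on signal $s$ votes $\mathbf{A}$ if $u_n(\mathbf{A}\mid s)>u_n(\mathbf{R}\mid s)$ and $\mathbf{R}$ otherwise. $\lambda^{\mathbf{X}}_w(\Sigma)$: ex-ante probability that $\mathbf{X}$ wins in state $w$. Fidelity $A(\Sigma)=P_L\lambda^{\mathbf{R}}_L(\Sigma)+P_H\lambda^{\mathbf{A}}_H(\Sigma)$. Expected utility $u_n(\Sigma)=\sum_wP_w(\lambda^{\mathbf{A}}_w(\Sigma)v_n(w,\mathbf{A})+\lambda^{\mathbf{R}}_w(\Sigma)v_n(w,\mathbf{R}))$. $\Sigma$ is an $\varepsilon$-strong Bayes Nash Equilibrium if there is no set $D$ of agents and profile $\Sigma'$ with $\sigma'_n=\sigma_n$ for $n\notin D$, $u_n(\Sigma')\ge u_n(\Sigma)$ for all $n\in D$ and $u_n(\Sigma')>u_n(\Sigma)+\varepsilon$ for some $n\in D$. *)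

theory Defs
  imports Complex_Main
begin

datatype world = WL | WH
datatype signal = Sl | Sh
datatype outcome = Acc | Rej

definition friendly :: "(world \<Rightarrow> outcome \<Rightarrow> nat) \<Rightarrow> bool" where
  "friendly v \<longleftrightarrow> v WH Acc > v WL Acc \<and> v WL Acc > v WL Rej \<and> v WL Rej > v WH Rej"

definition unfriendly :: "(world \<Rightarrow> outcome \<Rightarrow> nat) \<Rightarrow> bool" where
  "unfriendly v \<longleftrightarrow> v WL Rej > v WH Rej \<and> v WH Rej > v WH Acc \<and> v WH Acc > v WL Acc"

definition contingent :: "(world \<Rightarrow> outcome \<Rightarrow> nat) \<Rightarrow> bool" where
  "contingent v \<longleftrightarrow> v WH Acc > v WH Rej \<and> v WL Rej > v WL Acc"

text \<open>Posterior Pr[W = w | S_n = s] by Bayes' rule; P is the prior, Psig s w = Pr[S = s | W = w].\<close>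
definition posterior :: "(world \<Rightarrow> real) \<Rightarrow> (signal \<Rightarrow> world \<Rightarrow> real) \<Rightarrow> signal \<Rightarrow> world \<Rightarrow> real" where
  "posterior P Psig s w = P w * Psig s w / (P WL * Psig s WL + P WH * Psig s WH)"

definition interim_util :: "(world \<Rightarrow> real) \<Rightarrow> (signal \<Rightarrow> world \<Rightarrow> real) \<Rightarrow>
    (world \<Rightarrow> outcome \<Rightarrow> nat) \<Rightarrow> signal \<Rightarrow> outcome \<Rightarrow> real" where
  "interim_util P Psig v s X =
     posterior P Psig s WL * real (v WL X) + posterior P Psig s WH * real (v WH X)"

text \<open>A profile Sig gives, for agent n and signal s, the probability Sig n s of voting A.
  Agents of the instance with N agents are 0..N-1.\<close>
definition valid_profile :: "nat \<Rightarrow> (nat \<Rightarrow> signal \<Rightarrow> real) \<Rightarrow> bool" where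
  "valid_profile N Sig \<longleftrightarrow> (\<forall>n<N. \<forall>s. 0 \<le> Sig n s \<and> Sig n s \<le> 1)"

definition sincere :: "(world \<Rightarrow> real) \<Rightarrow> (signal \<Rightarrow> world \<Rightarrow> real) \<Rightarrow> nat \<Rightarrow>
    (nat \<Rightarrow> world \<Rightarrow> outcome \<Rightarrow> nat) \<Rightarrow> (nat \<Rightarrow> signal \<Rightarrow> real) \<Rightarrow> bool" where
  "sincere P Psig N v Sig \<longleftrightarrow>
     (\<forall>n<N. \<forall>s. Sig n s =
        (if interim_util P Psig (v n) s Acc > interim_util P Psig (v n) s Rej then 1 else 0))"

definition vote_prob :: "(signal \<Rightarrow> world \<Rightarrow> real) \<Rightarrow> (nat \<Rightarrow> signal \<Rightarrow> real) \<Rightarrow> world \<Rightarrow> nat \<Rightarrow> real" where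
  "vote_prob Psig Sig w n = Psig Sl w * Sig n Sl + Psig Sh w * Sig n Sh"

text \<open>lam mu Psig N Sig w X: probability that outcome X wins in state w; agents vote
  independently given w, and A wins iff at least mu*N agents vote A.\<close>
definition lam :: "real \<Rightarrow> (signal \<Rightarrow> world \<Rightarrow> real) \<Rightarrow> nat \<Rightarrow> (nat \<Rightarrow> signal \<Rightarrow> real) \<Rightarrow>
    world \<Rightarrow> outcome \<Rightarrow> real" where
  "lam mu Psig N Sig w X =
     (\<Sum>S \<in> {S. S \<subseteq> {..<N} \<and> ((X = Acc) \<longleftrightarrow> mu * real N \<le> real (card S))}.
        (\<Prod>n\<in>S. vote_prob Psig Sig w n) * (\<Prod>n\<in>{..<N} - S. 1 - vote_prob Psig Sig w n))"

definition fidelity :: "(world \<Rightarrow> real) \<Rightarrow> real \<Rightarrow> (signal \<Rightarrow> world \<Rightarrow> real) \<Rightarrow> nat \<Rightarrow>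
    (nat \<Rightarrow> signal \<Rightarrow> real) \<Rightarrow> real" where
  "fidelity P mu Psig N Sig = P WL * lam mu Psig N Sig WL Rej + P WH * lam mu Psig N Sig WH Acc"

definition exp_util :: "(world \<Rightarrow> real) \<Rightarrow> real \<Rightarrow> (signal \<Rightarrow> world \<Rightarrow> real) \<Rightarrow> nat \<Rightarrow>
    (nat \<Rightarrow> signal \<Rightarrow> real) \<Rightarrow> (world \<Rightarrow> outcome \<Rightarrow> nat) \<Rightarrow> real" where
  "exp_util P mu Psig N Sig v =
     (\<Sum>w\<in>{WL, WH}. P w * (lam mu Psig N Sig w Acc * real (v w Acc)
                           + lam mu Psig N Sig w Rej * real (v w Rej)))"

definition strong_BNE :: "(world \<Rightarrow> real) \<Rightarrow> real \<Rightarrow> (signal \<Rightarrow> world \<Rightarrow> real) \<Rightarrow> nat \<Rightarrow>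
    (nat \<Rightarrow> world \<Rightarrow> outcome \<Rightarrow> nat) \<Rightarrow> (nat \<Rightarrow> signal \<Rightarrow> real) \<Rightarrow> real \<Rightarrow> bool" where
  "strong_BNE P mu Psig N v Sig \<epsilon> \<longleftrightarrow>
     \<not> (\<exists>D Sig'. D \<subseteq> {..<N} \<and> valid_profile N Sig' \<and>
          (\<forall>n<N. n \<notin> D \<longrightarrow> Sig' n = Sig n) \<and>
          (\<forall>n\<in>D. exp_util P mu Psig N Sig' (v n) \<ge> exp_util P mu Psig N Sig (v n)) \<and>
          (\<exists>n\<in>D. exp_util P mu Psig N Sig' (v n) > exp_util P mu Psig N Sig (v n) + \<epsilon>))"

end

theory Submission
  imports Defs
begin


definition W :: "(nat \<Rightarrow> real) \<Rightarrow> nat set \<Rightarrow> nat set \<Rightarrow> real" where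
  "W p I S = (\<Prod>n\<in>S. p n) * (\<Prod>n\<in>I - S. 1 - p n)"

lemma W_step:
  assumes "finite I" "i \<notin> I"
  shows "(\<Sum>S\<in>Pow (insert i I). W p (insert i I) S * g S)
       = (\<Sum>S\<in>Pow I. W p I S * ((1 - p i) * g S + p i * g (insert i S)))"
proof -
  have disj: "Pow I \<inter> insert i ` Pow I = {}" using assms by auto
  have inj: "inj_on (insert i) (Pow I)" using assms unfolding inj_on_def by (metis PowD Diff_insert_absorb subsetD)
  have "(\<Sum>S\<in>Pow (insert i I). W p (insert i I) S * g S)
      = (\<Sum>S\<in>Pow I. W p (insert i I) S * g S) + (\<Sum>S\<in>insert i ` Pow I. W p (insert i I) S * g S)"
    unfolding Pow_insert using assms disj by (intro sum.union_disjoint) auto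
  also have "(\<Sum>S\<in>insert i ` Pow I. W p (insert i I) S * g S) = (\<Sum>S\<in>Pow I. W p (insert i I) (insert i S) * g (insert i S))"
    using inj by (simp add: sum.reindex)
  also have "(\<Sum>S\<in>Pow I. W p (insert i I) S * g S) = (\<Sum>S\<in>Pow I. W p I S * ((1 - p i) * g S))"
  proof (rule sum.cong)
    fix S assume "S \<in> Pow I"
    then have "insert i I - S = insert i (I - S)" "i \<notin> I - S" "finite (I - S)" using assms by auto
    then show "W p (insert i I) S * g S = W p I S * ((1 - p i) * g S)"
      unfolding W_def by (simp add: prod.insert)
  qed simp
  also have "(\<Sum>S\<in>Pow I. W p (insert i I) (insert i S) * g (insert i S)) = (\<Sum>S\<in>Pow I. W p I S * (p i * g (insert i S)))"
  proof (rule sum.cong)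
    fix S assume "S \<in> Pow I"
    then have "insert i I - insert i S = I - S" "i \<notin> S" "finite S" using assms finite_subset by auto
    then show "W p (insert i I) (insert i S) * g (insert i S) = W p I S * (p i * g (insert i S))"
      unfolding W_def by (simp add: prod.insert)
  qed simp
  finally show ?thesis by (simp add: sum.distrib[symmetric] algebra_simps)
qed

lemma W_sum1: "finite I \<Longrightarrow> (\<Sum>S\<in>Pow I. W p I S) = 1"
proof (induction I rule: finite_induct)
  case empty then show ?case by (simp add: W_def)
next
  case (insert i I)
  have "(\<Sum>S\<in>Pow (insert i I). W p (insert i I) S) = (\<Sum>S\<in>Pow (insert i I). W p (insert i I) S * 1)" by simp
  also have "\<dots> = (\<Sum>S\<in>Pow I. W p I S * ((1 - p i) * 1 + p i * 1))" by (rule W_step[OF insert.hyps(1,2)])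
  finally show ?case using insert by simp
qed

lemma W_nonneg: "(\<forall>i\<in>I. 0 \<le> p i \<and> p i \<le> 1) \<Longrightarrow> S \<subseteq> I \<Longrightarrow> W p I S \<ge> 0"
  unfolding W_def by (intro mult_nonneg_nonneg prod_nonneg) auto

lemma W_mean: "finite I \<Longrightarrow> (\<Sum>S\<in>Pow I. W p I S * real (card S)) = (\<Sum>i\<in>I. p i)"
proof (induction I rule: finite_induct)
  case empty then show ?case by (simp add: W_def)
next
  case (insert i I)
  have "(\<Sum>S\<in>Pow (insert i I). W p (insert i I) S * real (card S))
     = (\<Sum>S\<in>Pow I. W p I S * ((1 - p i) * real (card S) + p i * real (card (insert i S))))"
    by (rule W_step[OF insert.hyps(1,2)])
  also have "\<dots> = (\<Sum>S\<in>Pow I. W p I S * real (card S) + p i * W p I S)"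
  proof (rule sum.cong)
    fix S assume "S \<in> Pow I"
    then have "card (insert i S) = card S + 1" using insert finite_subset[of S I] by (auto simp: card_insert_if subset_iff)
    then show "W p I S * ((1 - p i) * real (card S) + p i * real (card (insert i S))) = W p I S * real (card S) + p i * W p I S"
      by (simp add: algebra_simps)
  qed simp
  also have "\<dots> = (\<Sum>i\<in>I. p i) + p i" using insert W_sum1[of I p]
    by (simp add: sum.distrib sum_distrib_left[symmetric])
  finally show ?case using insert by simp
qed

lemma W_sq: "finite I \<Longrightarrow> (\<Sum>S\<in>Pow I. W p I S * real (card S)^2) = (\<Sum>i\<in>I. p i)^2 + (\<Sum>i\<in>I. p i * (1 - p i))"
proof (induction I rule: finite_induct)
  case empty then show ?case by (simp add: W_def)
next
  case (insert i I)
  have "(\<Sum>S\<in>Pow (insert i I). W p (insert i I) S * real (card S)^2)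
     = (\<Sum>S\<in>Pow I. W p I S * ((1 - p i) * real (card S)^2 + p i * real (card (insert i S))^2))"
    by (rule W_step[OF insert.hyps(1,2)])
  also have "\<dots> = (\<Sum>S\<in>Pow I. W p I S * real (card S)^2 + (2 * p i) * (W p I S * real (card S)) + p i * W p I S)"
  proof (rule sum.cong)
    fix S assume "S \<in> Pow I"
    then have "card (insert i S) = card S + 1" using insert finite_subset[of S I] by (auto simp: card_insert_if subset_iff)
    then show "W p I S * ((1 - p i) * real (card S)^2 + p i * real (card (insert i S))^2) = W p I S * real (card S)^2 + (2 * p i) * (W p I S * real (card S)) + p i * W p I S"
      by (simp add: algebra_simps power2_eq_square)
  qed simp
  also have "\<dots> = (\<Sum>i\<in>I. p i)^2 + (\<Sum>i\<in>I. p i * (1 - p i)) + 2 * p i * (\<Sum>i\<in>I. p i) + p i"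
    using insert W_sum1[of I p] W_mean[of I p]
    by (simp add: sum.distrib sum_distrib_left[symmetric])
  finally show ?case using insert by (simp add: algebra_simps power2_eq_square)
qed

lemma W_cheb:
  assumes "finite I" "\<forall>i\<in>I. 0 \<le> p i \<and> p i \<le> 1" "a > 0"
  shows "(\<Sum>S\<in>Pow I. W p I S * (if a \<le> \<bar>real (card S) - (\<Sum>i\<in>I. p i)\<bar> then 1 else 0)) \<le> real (card I) / a^2"
proof -
  define m where "m = (\<Sum>i\<in>I. p i)"
  have "(\<Sum>S\<in>Pow I. W p I S * (if a \<le> \<bar>real (card S) - m\<bar> then 1 else 0))
     \<le> (\<Sum>S\<in>Pow I. W p I S * ((real (card S) - m)^2 / a^2))"
  proof (rule sum_mono)
    fix S assume S: "S \<in> Pow I"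
    have "(if a \<le> \<bar>real (card S) - m\<bar> then 1 else 0) \<le> (real (card S) - m)^2 / a^2"
    proof (cases "a \<le> \<bar>real (card S) - m\<bar>")
      case True
      then have "a^2 \<le> \<bar>real (card S) - m\<bar>^2" using assms(3) by (intro power_mono) auto
      then show ?thesis using True assms(3) by (simp add: power2_abs)
    qed simp
    then show "W p I S * (if a \<le> \<bar>real (card S) - m\<bar> then 1 else 0) \<le> W p I S * ((real (card S) - m)^2 / a^2)"
      using W_nonneg[of I p S] assms S by (intro mult_left_mono) auto
  qed
  also have "\<dots> = ((\<Sum>S\<in>Pow I. W p I S * real (card S)^2) - 2 * m * (\<Sum>S\<in>Pow I. W p I S * real (card S)) + m^2 * (\<Sum>S\<in>Pow I. W p I S)) / a^2"
    by (simp add: sum_divide_distrib[symmetric] sum_distrib_left sum_subtractf sum.distrib power2_diff algebra_simps)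
  also have "\<dots> = (\<Sum>i\<in>I. p i * (1 - p i)) / a^2"
    using W_sum1[OF assms(1)] W_mean[OF assms(1)] W_sq[OF assms(1)] unfolding m_def by (simp add: power2_eq_square)
  also have "\<dots> \<le> real (card I) / a^2"
  proof -
    have "(\<Sum>i\<in>I. p i * (1 - p i)) \<le> (\<Sum>i\<in>I. 1)"
      using assms(2) by (intro sum_mono) (simp add: mult_le_one)
    then show ?thesis by (simp add: divide_right_mono)
  qed
  finally show ?thesis unfolding m_def .
qed

lemma W_mono:
  assumes "finite I" "\<forall>i\<in>I. 0 \<le> p i \<and> p i \<le> q i \<and> q i \<le> 1"
  shows "(\<Sum>S\<in>Pow I. W p I S * (if t \<le> real (card S) then 1 else 0)) \<le> (\<Sum>S\<in>Pow I. W q I S * (if t \<le> real (card S) then 1 else 0))"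
  using assms
proof (induction I arbitrary: t rule: finite_induct)
  case empty then show ?case by (simp add: W_def)
next
  case (insert i I)
  define G where "G r u = (\<Sum>S\<in>Pow I. W r I S * (if u \<le> real (card S) then 1 else 0))" for r u
  have step: "(\<Sum>S\<in>Pow (insert i I). W r (insert i I) S * (if t \<le> real (card S) then 1 else 0))
       = (1 - r i) * G r t + r i * G r (t - 1)" for r
  proof -
    have "(\<Sum>S\<in>Pow (insert i I). W r (insert i I) S * (if t \<le> real (card S) then 1 else 0))
      = (\<Sum>S\<in>Pow I. W r I S * ((1 - r i) * (if t \<le> real (card S) then 1 else 0) + r i * (if t \<le> real (card (insert i S)) then 1 else 0)))"
      by (rule W_step[OF insert.hyps(1,2)])
    also have "\<dots> = (\<Sum>S\<in>Pow I. (1 - r i) * (W r I S * (if t \<le> real (card S) then 1 else 0)) + r i * (W r I S * (if t - 1 \<le> real (card S) then 1 else 0)))"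
    proof (rule sum.cong)
      fix S assume "S \<in> Pow I"
      then have "card (insert i S) = card S + 1" using insert finite_subset[of S I] by (auto simp: card_insert_if subset_iff)
      then show "W r I S * ((1 - r i) * (if t \<le> real (card S) then 1 else 0) + r i * (if t \<le> real (card (insert i S)) then 1 else 0)) = (1 - r i) * (W r I S * (if t \<le> real (card S) then 1 else 0)) + r i * (W r I S * (if t - 1 \<le> real (card S) then 1 else 0))"
        by (auto simp: algebra_simps)
    qed simp
    finally show ?thesis unfolding G_def by (simp add: sum.distrib sum_distrib_left)
  qed
  have IH: "G p u \<le> G q u" for u using insert by (auto simp: G_def)
  have qmono: "G q t \<le> G q (t - 1)" unfolding G_def
  proof (rule sum_mono)
    fix S assume "S \<in> Pow I"
    then have "W q I S \<ge> 0" using insert.prems by (intro W_nonneg) auto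
    then show "W q I S * (if t \<le> real (card S) then 1 else 0) \<le> W q I S * (if t - 1 \<le> real (card S) then 1 else 0)"
      by auto
  qed
  have pi: "0 \<le> p i" "p i \<le> q i" "q i \<le> 1" using insert.prems by auto
  have "(1 - p i) * G p t + p i * G p (t - 1) \<le> (1 - p i) * G q t + p i * G q (t - 1)"
    using pi IH by (intro add_mono mult_left_mono) auto
  also have "\<dots> \<le> (1 - q i) * G q t + q i * G q (t - 1)"
  proof -
    have "(q i - p i) * G q t \<le> (q i - p i) * G q (t - 1)" using pi qmono by (intro mult_left_mono) auto
    then show ?thesis by (simp add: algebra_simps)
  qed
  finally show ?case using step by simp
qed



lemma case_cont:
  fixes x y d B \<alpha> \<beta> :: real
  assumes "x \<ge> -d" "y \<le> d" "d \<ge> 0" "1 \<le> B" "-B \<le> \<alpha>" "\<alpha> \<le> -1" "1 \<le> \<beta>" "\<beta> \<le> B" "x*\<alpha> + y*\<beta> \<ge> 0"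
  shows "\<bar>x\<bar> \<le> d*B \<and> \<bar>y\<bar> \<le> d*B"
proof -
  have "d*1 \<le> d*B" using assms by (intro mult_left_mono) auto
  then have dB: "d \<le> d*B" by simp
  have dB0: "0 \<le> d*B" using assms by (intro mult_nonneg_nonneg) auto
  have x: "x \<le> d*B"
  proof (cases "x \<le> 0")
    case False
    then have "x*1 \<le> x*(-\<alpha>)" using assms by (intro mult_left_mono) auto
    then have "x \<le> x*(-\<alpha>)" by simp
    also have "\<dots> \<le> y*\<beta>" using assms by simp
    also have "\<dots> \<le> d*B"
    proof (cases "y \<le> 0")
      case True then have "y*\<beta> \<le> 0" using assms by (simp add: mult_nonpos_nonneg)
      then show ?thesis using assms dB0 by linarith
    next
      case False then show ?thesis using assms by (intro mult_mono) auto
    qed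
    finally show ?thesis .
  qed (use dB0 in linarith)
  have y: "-y \<le> d*B"
  proof (cases "y \<ge> 0")
    case False
    then have "(-y)*1 \<le> (-y)*\<beta>" using assms by (intro mult_left_mono) auto
    then have "-y \<le> (-y)*\<beta>" by simp
    also have "\<dots> \<le> x*\<alpha>" using assms by simp
    also have "\<dots> \<le> d*B"
    proof (cases "x \<ge> 0")
      case True then have "x*\<alpha> \<le> 0" using assms by (simp add: mult_nonneg_nonpos)
      then show ?thesis using assms dB0 by linarith
    next
      case False then have "x*\<alpha> = (-x)*(-\<alpha>)" by simp
      also have "\<dots> \<le> d*B" using False assms by (intro mult_mono) auto
      finally show ?thesis .
    qed
    finally show ?thesis .
  qed (use dB0 in linarith)
  show ?thesis using x y dB assms by auto
qed

lemma case_fu: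
  fixes x y d a1 b1 a2 b2 :: real
  assumes "x \<ge> -d" "y \<le> d" "d \<ge> 0" "a1 > 0" "b1 > a1" "b2 > 0" "a2 > b2"
    "x*a1 + y*b1 \<ge> 0" "x*a2 + y*b2 \<le> 0"
  shows "\<bar>x\<bar> \<le> d \<and> \<bar>y\<bar> \<le> d"
proof (cases "y > 0")
  case True
  have "y*b2 > 0" using True assms by simp
  then have "x*a2 < 0" using assms by linarith
  then have "x < 0" using assms by (simp add: mult_less_0_iff)
  then show ?thesis using assms True by auto
next
  case False
  have "x*a1 \<ge> (-y)*b1" using assms by simp
  moreover have "(-y)*b1 \<ge> (-y)*a1" using False assms by (intro mult_left_mono) auto
  ultimately have "x*a1 \<ge> (-y)*a1" by simp
  then have xy: "x \<ge> -y" using assms(4) by (rule mult_right_le_imp_le)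
  have "x*a2 \<le> (-y)*b2" using assms by simp
  moreover have "(-y)*b2 \<le> (-y)*a2" using False assms by (intro mult_left_mono) auto
  ultimately have "x*a2 \<le> (-y)*a2" by simp
  then have "x \<le> -y" using assms(6,7) by (intro mult_right_le_imp_le[of x a2 "-y"]) auto
  then have "x = -y" using xy by simp
  then have "x*a1 + y*b1 = y*(b1 - a1)" by (simp add: algebra_simps)
  then have "y*(b1-a1) \<ge> 0" using assms by simp
  then have "y \<ge> 0" using assms by (simp add: zero_le_mult_iff)
  then have "y = 0" using False by simp
  then show ?thesis using \<open>x = -y\<close> assms by simp
qed

lemma gain_bound:
  fixes x y \<alpha> \<beta> B :: real
  assumes "\<bar>\<alpha>\<bar> \<le> B" "\<bar>\<beta>\<bar> \<le> B"
  shows "x*\<alpha> + y*\<beta> \<le> B*(\<bar>x\<bar> + \<bar>y\<bar>)"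
proof -
  have "x*\<alpha> \<le> \<bar>x*\<alpha>\<bar>" by (rule abs_ge_self)
  also have "\<dots> = \<bar>x\<bar>*\<bar>\<alpha>\<bar>" by (rule abs_mult)
  also have "\<dots> \<le> \<bar>x\<bar>*B" using assms by (intro mult_left_mono) auto
  finally have 1: "x*\<alpha> \<le> \<bar>x\<bar>*B" .
  have "y*\<beta> \<le> \<bar>y*\<beta>\<bar>" by (rule abs_ge_self)
  also have "\<dots> = \<bar>y\<bar>*\<bar>\<beta>\<bar>" by (rule abs_mult)
  also have "\<dots> \<le> \<bar>y\<bar>*B" using assms by (intro mult_left_mono) auto
  finally have "y*\<beta> \<le> \<bar>y\<bar>*B" .
  note 1 this
  then show ?thesis by (simp add: algebra_simps)
qed

lemma cont_lower:
  fixes u u' w w' A \<beta> B :: real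
  assumes "u \<ge> 0" "u' \<ge> 0" "w \<ge> 0" "w' \<ge> 0" "1 \<le> A" "A \<le> B" "1 \<le> \<beta>" "\<beta> \<le> B"
  shows "(u - u')*A + (w - w')*\<beta> \<ge> u + w - B*(u' + w')"
proof -
  have "u*1 \<le> u*A" "w*1 \<le> w*\<beta>" using assms by (intro mult_left_mono; simp)+
  moreover have "u'*A \<le> u'*B" "w'*\<beta> \<le> w'*B" using assms by (simp_all add: mult_left_mono)
  ultimately show ?thesis by (simp add: algebra_simps)
qed

lemma exists_t:
  fixes a b r :: real
  assumes "0 \<le> b" "b < a" "0 < r" "r < a"
  shows "\<exists>t. 0 \<le> t \<and> t \<le> 1 \<and> t*a > r \<and> t*b < r"
proof (cases "2*r \<le> a + b")
  case True
  define t where "t = 2*r/(a+b)"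
  have ab: "a + b > 0" using assms by simp
  have "t*a - r = r*(a-b)/(a+b)" "r - t*b = r*(a-b)/(a+b)" unfolding t_def using ab by (simp_all add: field_simps)
  moreover have "r*(a-b)/(a+b) > 0" using assms ab by simp
  moreover have "0 \<le> t" "t \<le> 1" unfolding t_def using True ab assms by auto
  ultimately show ?thesis by (intro exI[of _ t]) auto
next
  case False
  then show ?thesis using assms by (intro exI[of _ 1]) auto
qed



lemma lam_eq: "lam mu Psig N Sig w X = (\<Sum>S\<in>Pow {..<N}. W (vote_prob Psig Sig w) {..<N} S * (if (X = Acc) = (mu * real N \<le> real (card S)) then 1 else 0))"
proof -
  have "{S. S \<subseteq> {..<N} \<and> ((X = Acc) = (mu * real N \<le> real (card S)))} = {S\<in>Pow {..<N}. (X = Acc) = (mu * real N \<le> real (card S))}" by auto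
  then have "lam mu Psig N Sig w X = (\<Sum>S\<in>{S\<in>Pow {..<N}. (X = Acc) = (mu * real N \<le> real (card S))}. W (vote_prob Psig Sig w) {..<N} S)"
    unfolding lam_def W_def by simp
  also have "\<dots> = (\<Sum>S\<in>Pow {..<N}. if (X = Acc) = (mu * real N \<le> real (card S)) then W (vote_prob Psig Sig w) {..<N} S else 0)"
    by (rule sum.inter_filter) simp
  finally show ?thesis by (simp add: if_distrib cong: if_cong)
qed

lemma lam_Rej: "lam mu Psig N Sig w Rej = 1 - lam mu Psig N Sig w Acc"
proof -
  have "lam mu Psig N Sig w Rej + lam mu Psig N Sig w Acc = (\<Sum>S\<in>Pow {..<N}. W (vote_prob Psig Sig w) {..<N} S)"
    unfolding lam_eq sum.distrib[symmetric] by (intro sum.cong) auto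
  then show ?thesis using W_sum1[of "{..<N}"] by simp
qed

lemma vp_range:
  assumes "\<forall>w. Psig Sl w \<ge> 0 \<and> Psig Sh w \<ge> 0 \<and> Psig Sl w + Psig Sh w = 1" "valid_profile N Sig" "n < N"
  shows "0 \<le> vote_prob Psig Sig w n \<and> vote_prob Psig Sig w n \<le> 1"
proof -
  have a: "Psig Sl w \<ge> 0" "Psig Sh w \<ge> 0" "Psig Sl w + Psig Sh w = 1" using assms(1) by auto
  have b: "0 \<le> Sig n Sl" "Sig n Sl \<le> 1" "0 \<le> Sig n Sh" "Sig n Sh \<le> 1" using assms(2,3) unfolding valid_profile_def by auto
  have "Psig Sl w * Sig n Sl \<le> Psig Sl w" "Psig Sh w * Sig n Sh \<le> Psig Sh w"
    using a b by (simp_all add: mult_left_le)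
  then show ?thesis using a b unfolding vote_prob_def by auto
qed

lemma lam_range:
  assumes "\<forall>w. Psig Sl w \<ge> 0 \<and> Psig Sh w \<ge> 0 \<and> Psig Sl w + Psig Sh w = 1" "valid_profile N Sig"
  shows "0 \<le> lam mu Psig N Sig w Acc \<and> lam mu Psig N Sig w Acc \<le> 1"
proof -
  have vp: "\<forall>i\<in>{..<N}. 0 \<le> vote_prob Psig Sig w i \<and> vote_prob Psig Sig w i \<le> 1"
    using vp_range[OF assms] by auto
  have nn: "0 \<le> lam mu Psig N Sig w X" for X
    unfolding lam_eq using vp by (intro sum_nonneg mult_nonneg_nonneg W_nonneg) auto
  show ?thesis using nn[of Acc] nn[of Rej] lam_Rej[of mu Psig N Sig w] by auto
qed

lemma lam_mono:
  assumes "\<forall>w. Psig Sl w \<ge> 0 \<and> Psig Sh w \<ge> 0 \<and> Psig Sl w + Psig Sh w = 1" "valid_profile N Sig" "valid_profile N Sig'"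
    "\<forall>n<N. \<forall>s. Sig n s \<le> Sig' n s"
  shows "lam mu Psig N Sig w Acc \<le> lam mu Psig N Sig' w Acc"
proof -
  have "\<forall>i\<in>{..<N}. 0 \<le> vote_prob Psig Sig w i \<and> vote_prob Psig Sig w i \<le> vote_prob Psig Sig' w i \<and> vote_prob Psig Sig' w i \<le> 1"
  proof
    fix i assume i: "i \<in> {..<N}"
    have "vote_prob Psig Sig w i \<le> vote_prob Psig Sig' w i"
      unfolding vote_prob_def using assms(1,4) i by (intro add_mono mult_left_mono) auto
    then show "0 \<le> vote_prob Psig Sig w i \<and> vote_prob Psig Sig w i \<le> vote_prob Psig Sig' w i \<and> vote_prob Psig Sig' w i \<le> 1"
      using vp_range[OF assms(1,2)] vp_range[OF assms(1,3)] i by auto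
  qed
  then show ?thesis unfolding lam_eq by (simp add: W_mono)
qed

lemma gain_eq:
  "exp_util P mu Psig N Sig' v - exp_util P mu Psig N Sig v =
     P WL * (lam mu Psig N Sig' WL Acc - lam mu Psig N Sig WL Acc) * (real (v WL Acc) - real (v WL Rej))
   + P WH * (lam mu Psig N Sig' WH Acc - lam mu Psig N Sig WH Acc) * (real (v WH Acc) - real (v WH Rej))"
  unfolding exp_util_def by (simp add: lam_Rej algebra_simps)

lemma pos_combo:
  fixes a b x1 x2 y1 y2 :: real
  assumes "0 \<le> a" "0 \<le> b" "a + b = 1" "x1 > y1" "x2 > y2"
  shows "a * x1 + b * x2 > a * y1 + b * y2"
proof (cases "a > 0")
  case True
  then have "a * x1 > a * y1" "b * x2 \<ge> b * y2" using assms by (auto intro: mult_left_mono)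
  then show ?thesis by linarith
next
  case False
  then have "a = 0" "b = 1" using assms by auto
  then show ?thesis using assms by simp
qed

lemma post_props:
  assumes "P WL > 0" "P WH > 0" "\<forall>w. Psig Sl w \<ge> 0 \<and> Psig Sh w \<ge> 0 \<and> Psig Sl w + Psig Sh w = 1"
    "Psig Sh WH > Psig Sh WL" "Psig Sl WH < Psig Sl WL"
  shows "posterior P Psig s WL \<ge> 0 \<and> posterior P Psig s WH \<ge> 0 \<and> posterior P Psig s WL + posterior P Psig s WH = 1"
proof -
  have d: "P WL * Psig s WL + P WH * Psig s WH > 0"
  proof (cases s)
    case Sl
    have "P WL * Psig Sl WL > 0" using assms by (smt (verit) mult_pos_pos)
    moreover have "P WH * Psig Sl WH \<ge> 0" using assms by (simp add: less_imp_le)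
    ultimately show ?thesis using Sl by simp
  next
    case Sh
    have "P WH * Psig Sh WH > 0" using assms by (smt (verit) mult_pos_pos)
    moreover have "P WL * Psig Sh WL \<ge> 0" using assms by (simp add: less_imp_le)
    ultimately show ?thesis using Sh by simp
  qed
  have "P WL * Psig s WL \<ge> 0" "P WH * Psig s WH \<ge> 0" using assms by (cases s; simp add: less_imp_le)+
  then show ?thesis using d unfolding posterior_def by (auto simp: add_divide_distrib[symmetric])
qed



lemma exists_q:
  fixes aF aC mu hL hH :: real
  assumes "aC > 0" "aF < mu" "mu < aF + aC" "0 \<le> hL" "hL < hH" "hH \<le> 1"
  shows "\<exists>qh ql. 0 \<le> qh \<and> qh \<le> 1 \<and> 0 \<le> ql \<and> ql \<le> 1 \<and>
     aF + aC*(hH*qh + (1-hH)*ql) > mu \<and> aF + aC*(hL*qh + (1-hL)*ql) < mu"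
proof (cases "aF + aC*hH > mu")
  case True
  define r where "r = (mu - aF)/aC"
  have "0 < r" "r < hH" using assms True unfolding r_def by (auto simp: field_simps)
  then obtain t where t: "0 \<le> t" "t \<le> 1" "t*hH > r" "t*hL < r" using exists_t[of hL hH r] assms by auto
  have "aC*(t*hH) > aC*r" "aC*(t*hL) < aC*r" using t assms by auto
  moreover have "aC*r = mu - aF" unfolding r_def using assms by simp
  ultimately show ?thesis using t by (intro exI[of _ t] exI[of _ 0]) (auto simp: algebra_simps)
next
  case False
  define r where "r = (aF + aC - mu)/aC"
  have "aC*hL < aC*hH" using assms by simp
  then have "aF + aC - mu < aC*(1-hL)" using False by (simp add: algebra_simps)
  then have "r < 1 - hL" using assms unfolding r_def by (simp add: divide_less_eq mult.commute)
  moreover have "0 < r" using assms unfolding r_def by simp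
  ultimately have "0 < r" "r < 1 - hL" by auto
  then obtain s where s: "0 \<le> s" "s \<le> 1" "s*(1-hL) > r" "s*(1-hH) < r" using exists_t[of "1-hH" "1-hL" r] assms by auto
  have "aC*(s*(1-hL)) > aC*r" "aC*(s*(1-hH)) < aC*r" using s assms by auto
  moreover have "aC*r = aF + aC - mu" unfolding r_def using assms by simp
  ultimately show ?thesis using s by (intro exI[of _ 1] exI[of _ "1-s"]) (auto simp: algebra_simps)
qed

lemma sum_indic: "(\<Sum>n\<in>{..<N::nat}. if Q n then (c::real) else 0) = c * real (card {n. n < N \<and> Q n})"
  using sum.inter_filter[of "{..<N}" "\<lambda>_. c" Q] by (simp add: mult.commute)

lemma types_disj:
  "friendly v \<Longrightarrow> \<not> unfriendly v" "friendly v \<Longrightarrow> \<not> contingent v" "unfriendly v \<Longrightarrow> \<not> contingent v"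
  unfolding friendly_def unfriendly_def contingent_def by auto


lemma lam_tail:
  assumes Ps: "\<forall>w. Psig Sl w \<ge> 0 \<and> Psig Sh w \<ge> 0 \<and> Psig Sl w + Psig Sh w = 1"
    and val: "valid_profile N S" and a: "a > 0"
    and cond: "\<And>c. (X = Acc) = (mu * real N \<le> c) \<Longrightarrow> a \<le> \<bar>c - (\<Sum>n\<in>{..<N}. vote_prob Psig S w n)\<bar>"
  shows "lam mu Psig N S w X \<le> real N / a^2"
proof -
  let ?p = "vote_prob Psig S w"
  have vp: "\<forall>i\<in>{..<N}. 0 \<le> ?p i \<and> ?p i \<le> 1" using vp_range[OF Ps val] by auto
  have "lam mu Psig N S w X \<le> (\<Sum>S\<in>Pow {..<N}. W ?p {..<N} S * (if a \<le> \<bar>real (card S) - (\<Sum>i\<in>{..<N}. ?p i)\<bar> then 1 else 0))"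
    unfolding lam_eq
  proof (rule sum_mono)
    fix T assume T: "T \<in> Pow {..<N}"
    have "W ?p {..<N} T \<ge> 0" using T vp by (intro W_nonneg) auto
    moreover have "(if (X = Acc) = (mu * real N \<le> real (card T)) then 1 else 0) \<le> (if a \<le> \<bar>real (card T) - (\<Sum>i\<in>{..<N}. ?p i)\<bar> then 1 else (0::real))"
      using cond[of "real (card T)"] by auto
    ultimately show "W ?p {..<N} T * (if (X = Acc) = (mu * real N \<le> real (card T)) then 1 else 0) \<le> W ?p {..<N} T * (if a \<le> \<bar>real (card T) - (\<Sum>i\<in>{..<N}. ?p i)\<bar> then 1 else 0)"
      by (metis mult_left_mono)
  qed
  also have "\<dots> \<le> real (card {..<N}) / a^2" using W_cheb[of "{..<N}" ?p a] vp a by simp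
  finally show ?thesis by simp
qed



theorem corollary4:
  fixes mu :: real and P :: "world \<Rightarrow> real" and Psig :: "signal \<Rightarrow> world \<Rightarrow> real"
    and aF aU aC :: real and B :: nat
    and v :: "nat \<Rightarrow> nat \<Rightarrow> world \<Rightarrow> outcome \<Rightarrow> nat"
    and Sig :: "nat \<Rightarrow> nat \<Rightarrow> signal \<Rightarrow> real"
  assumes "0 < mu" and "mu < 1"
    and "P WL > 0" and "P WH > 0" and "P WL + P WH = 1"
    and "\<forall>w. Psig Sl w \<ge> 0 \<and> Psig Sh w \<ge> 0 \<and> Psig Sl w + Psig Sh w = 1"
    and "Psig Sh WH > Psig Sh WL" and "Psig Sl WH < Psig Sl WL"
    and "aF \<ge> 0" and "aU \<ge> 0" and "aC \<ge> 0" and "aF + aU + aC = 1"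
    and "aF < mu" and "aU < 1 - mu"
    and "\<forall>N n w X. n < N \<longrightarrow> v N n w X \<le> B"
    and "\<forall>N n. n < N \<longrightarrow> v N n WH Acc > v N n WL Acc \<and> v N n WH Rej < v N n WL Rej"
    and "\<forall>N n. n < N \<longrightarrow> friendly (v N n) \<or> unfriendly (v N n) \<or> contingent (v N n)"
    and "\<forall>N. card {n. n < N \<and> friendly (v N n)} = nat \<lfloor>aF * real N\<rfloor>"
    and "\<forall>N. card {n. n < N \<and> unfriendly (v N n)} = nat \<lfloor>aU * real N\<rfloor>"
    and "\<forall>N. sincere P Psig N (v N) (Sig N)"
  shows "(\<lambda>N. fidelity P mu Psig N (Sig N)) \<longlonglongrightarrow> 1 \<longleftrightarrow>
         (\<exists>\<epsilon>::nat \<Rightarrow> real. \<epsilon> \<longlonglongrightarrow> 0 \<and>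
            (\<forall>N. strong_BNE P mu Psig N (v N) (Sig N) (\<epsilon> N)))"
proof -
  note Ps = assms(6)
  define LA where "LA N S w = lam mu Psig N S w Acc" for N S w
  define del where "del N = 1 - fidelity P mu Psig N (Sig N)" for N
  have post: "posterior P Psig s WL \<ge> 0 \<and> posterior P Psig s WH \<ge> 0 \<and> posterior P Psig s WL + posterior P Psig s WH = 1" for s
    using post_props[OF assms(3,4,6,7,8)] by blast
  have fr: "Sig N n s = 1" if "n < N" "friendly (v N n)" for N n s
  proof -
    have "interim_util P Psig (v N n) s Acc > interim_util P Psig (v N n) s Rej"
      unfolding interim_util_def using post[of s] that(2) unfolding friendly_def
      by (intro pos_combo) auto
    then show ?thesis using assms(20) that(1) unfolding sincere_def by auto
  qed
  have un: "Sig N n s = 0" if "n < N" "unfriendly (v N n)" for N n s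
  proof -
    have "interim_util P Psig (v N n) s Rej > interim_util P Psig (v N n) s Acc"
      unfolding interim_util_def using post[of s] that(2) unfolding unfriendly_def
      by (intro pos_combo) auto
    then show ?thesis using assms(20) that(1) unfolding sincere_def by auto
  qed
  have valid: "valid_profile N (Sig N)" for N
    using assms(20) unfolding sincere_def valid_profile_def by auto
  have LArange: "valid_profile N S \<Longrightarrow> 0 \<le> LA N S w \<and> LA N S w \<le> 1" for N S w
    unfolding LA_def using lam_range[OF Ps] by blast
  have del_eq: "del N = P WL * LA N (Sig N) WL + P WH * (1 - LA N (Sig N) WH)" for N
    unfolding del_def fidelity_def LA_def lam_Rej using assms(5) by (simp add: algebra_simps)
  have del_nn: "del N \<ge> 0" for N
    unfolding del_eq using LArange[OF valid, of N] assms(3,4) by (simp add: mult_nonneg_nonneg)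
  have lim_iff: "(\<lambda>N. fidelity P mu Psig N (Sig N)) \<longlonglongrightarrow> 1 \<longleftrightarrow> del \<longlonglongrightarrow> 0"
  proof -
    have "(\<lambda>N. fidelity P mu Psig N (Sig N)) \<longlonglongrightarrow> 1 \<longleftrightarrow> (\<lambda>N. fidelity P mu Psig N (Sig N) - 1) \<longlonglongrightarrow> 0"
      by (rule LIM_zero_iff[symmetric])
    also have "\<dots> \<longleftrightarrow> (\<lambda>N. - del N) \<longlonglongrightarrow> 0" unfolding del_def by simp
    also have "\<dots> \<longleftrightarrow> del \<longlonglongrightarrow> 0" using tendsto_minus_cancel_left[of del 0 sequentially] by simp
    finally show ?thesis .
  qed
  have gain: "exp_util P mu Psig N S' (v N n) - exp_util P mu Psig N (Sig N) (v N n)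
      = (P WL * (LA N S' WL - LA N (Sig N) WL)) * (real (v N n WL Acc) - real (v N n WL Rej))
      + (P WH * (LA N S' WH - LA N (Sig N) WH)) * (real (v N n WH Acc) - real (v N n WH Rej))" for N S' n
    unfolding LA_def gain_eq by simp
  have vB: "real (v N n w X) \<le> real B" if "n < N" for N n w X
    using assms(15) that by auto
  show ?thesis
  proof
    assume "(\<lambda>N. fidelity P mu Psig N (Sig N)) \<longlonglongrightarrow> 1"
    then have dlim: "del \<longlonglongrightarrow> 0" using lim_iff by simp
    define eps where "eps N = 2 * real B * (real B + 1) * del N" for N
    have "eps \<longlonglongrightarrow> 2 * real B * (real B + 1) * 0" unfolding eps_def by (intro tendsto_mult tendsto_const dlim)
    then have elim: "eps \<longlonglongrightarrow> 0" by simp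
    have key: False if D: "D \<subseteq> {..<N}" and S'v: "valid_profile N S'"
      and same: "\<forall>n<N. n \<notin> D \<longrightarrow> S' n = Sig N n"
      and ge: "\<forall>n\<in>D. exp_util P mu Psig N S' (v N n) \<ge> exp_util P mu Psig N (Sig N) (v N n)"
      and n0: "n0 \<in> D" and gt: "exp_util P mu Psig N S' (v N n0) > exp_util P mu Psig N (Sig N) (v N n0) + eps N"
      for N D S' n0
    proof -
      define x where "x = P WL * (LA N S' WL - LA N (Sig N) WL)"
      define y where "y = P WH * (LA N S' WH - LA N (Sig N) WH)"
      define al where "al n = real (v N n WL Acc) - real (v N n WL Rej)" for n
      define be where "be n = real (v N n WH Acc) - real (v N n WH Rej)" for n
      have g: "exp_util P mu Psig N S' (v N n) - exp_util P mu Psig N (Sig N) (v N n) = x * al n + y * be n" for n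
        unfolding x_def y_def al_def be_def by (rule gain)
      have gn: "x * al n + y * be n \<ge> 0" if "n \<in> D" for n using ge that g[of n] by auto
      have g0: "x * al n0 + y * be n0 > eps N" using gt g[of n0] by auto
      have n0N: "n0 < N" using n0 D by auto
      have "v N n0 WH Acc > v N n0 WL Acc" using assms(16) n0N by auto
      then have "1 \<le> v N n0 WH Acc" by simp
      then have B1: "real B \<ge> 1" using assms(15) n0N by (metis le_trans of_nat_1 of_nat_le_iff)
      have r1: "0 \<le> LA N S' w \<and> LA N S' w \<le> 1" for w using LArange[OF S'v] by blast
      have r0: "0 \<le> LA N (Sig N) w \<and> LA N (Sig N) w \<le> 1" for w using LArange[OF valid] by blast
      have "P WL * LA N S' WL \<ge> 0" using r1 assms(3) by simp
      moreover have "P WH * (1 - LA N (Sig N) WH) \<ge> 0" using r0 assms(4) by simp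
      ultimately have xlow: "x \<ge> - del N" unfolding x_def del_eq by (simp add: algebra_simps)
      have "P WH * LA N S' WH \<le> P WH" using r1 assms(4) by (simp add: mult_left_le)
      moreover have "P WL * LA N (Sig N) WL \<ge> 0" using r0 assms(3) by simp
      ultimately have yup: "y \<le> del N" unfolding y_def del_eq by (simp add: algebra_simps)
      have alB: "\<bar>al n\<bar> \<le> real B" "\<bar>be n\<bar> \<le> real B" if "n < N" for n
        unfolding al_def be_def using vB[OF that, of WL Acc] vB[OF that, of WL Rej] vB[OF that, of WH Acc] vB[OF that, of WH Rej]
        by (auto simp: abs_le_iff)
      have dn: "del N \<ge> 0" by (rule del_nn)
      have bound: "x * al n0 + y * be n0 \<le> real B * (\<bar>x\<bar> + \<bar>y\<bar>)"
        using alB[OF n0N] by (rule gain_bound)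
      have epsnn: "eps N \<ge> 0" unfolding eps_def using dn by simp
      have types: "friendly (v N n) \<or> unfriendly (v N n) \<or> contingent (v N n)" if "n \<in> D" for n
        using assms(17) that D by auto
      show False
      proof (cases "\<exists>c\<in>D. contingent (v N c)")
        case True
        then obtain c where c: "c \<in> D" "contingent (v N c)" by blast
        have cN: "c < N" using c D by auto
        have "v N c WL Acc + 1 \<le> v N c WL Rej" "v N c WH Rej + 1 \<le> v N c WH Acc"
          using c(2) unfolding contingent_def by auto
        then have "al c \<le> -1" "1 \<le> be c" unfolding al_def be_def by linarith+
        moreover have "- real B \<le> al c" "be c \<le> real B" using alB[OF cN] by auto
        ultimately have xy: "\<bar>x\<bar> \<le> del N * real B \<and> \<bar>y\<bar> \<le> del N * real B"
          using case_cont[of "del N" x y "real B" "al c" "be c"] xlow yup dn B1 gn[OF c(1)] by auto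
        have "real B * (\<bar>x\<bar> + \<bar>y\<bar>) \<le> real B * (2 * (del N * real B))"
          using xy by (intro mult_left_mono) auto
        also have "\<dots> \<le> eps N" unfolding eps_def using dn B1 by (simp add: algebra_simps mult_left_mono)
        finally show False using g0 bound by linarith
      next
        case noc: False
        show False
        proof (cases "(\<exists>f\<in>D. friendly (v N f)) \<and> (\<exists>u\<in>D. unfriendly (v N u))")
          case True
          then obtain f u where f: "f \<in> D" "friendly (v N f)" and u: "u \<in> D" "unfriendly (v N u)" by blast
          have "al f > 0" "be f > al f" using f(2) unfolding friendly_def al_def be_def by auto
          moreover have "- be u > 0" "- al u > - be u" using u(2) unfolding unfriendly_def al_def be_def by auto
          moreover have "x * (- al u) + y * (- be u) \<le> 0" using gn[OF u(1)] by simp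
          ultimately have xy: "\<bar>x\<bar> \<le> del N \<and> \<bar>y\<bar> \<le> del N"
            using case_fu[of "del N" x y "al f" "be f" "- be u" "- al u"] xlow yup dn gn[OF f(1)] by auto
          have "real B * (\<bar>x\<bar> + \<bar>y\<bar>) \<le> real B * (2 * del N)"
            using xy by (intro mult_left_mono) auto
          also have "\<dots> \<le> eps N" unfolding eps_def using dn B1 by (simp add: algebra_simps mult_left_mono)
          finally show False using g0 bound by linarith
        next
          case False
          then have allf: "(\<forall>n\<in>D. friendly (v N n)) \<or> (\<forall>n\<in>D. unfriendly (v N n))"
            using noc types by blast
          then show False
          proof
            assume af: "\<forall>n\<in>D. friendly (v N n)"
            have "\<forall>n<N. \<forall>s. S' n s \<le> Sig N n s"
            proof (intro allI impI)
              fix n s assume "n < N"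
              then show "S' n s \<le> Sig N n s"
                using af same fr S'v unfolding valid_profile_def by (cases "n \<in> D") auto
            qed
            then have "LA N S' w \<le> LA N (Sig N) w" for w
              unfolding LA_def using lam_mono[OF Ps S'v valid] by blast
            then have "x \<le> 0" "y \<le> 0" unfolding x_def y_def using assms(3,4)
              by (simp_all add: mult_nonneg_nonpos)
            moreover have "al n0 \<ge> 0" "be n0 \<ge> 0" using af n0 unfolding friendly_def al_def be_def by auto
            ultimately have "x * al n0 + y * be n0 \<le> 0"
              by (simp add: add_nonpos_nonpos mult_nonpos_nonneg)
            then show False using g0 epsnn by linarith
          next
            assume au: "\<forall>n\<in>D. unfriendly (v N n)"
            have "\<forall>n<N. \<forall>s. Sig N n s \<le> S' n s"
            proof (intro allI impI)
              fix n s assume "n < N"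
              then show "Sig N n s \<le> S' n s"
                using au same un S'v unfolding valid_profile_def by (cases "n \<in> D") auto
            qed
            then have "LA N (Sig N) w \<le> LA N S' w" for w
              unfolding LA_def using lam_mono[OF Ps valid S'v] by blast
            then have "x \<ge> 0" "y \<ge> 0" unfolding x_def y_def using assms(3,4)
              by simp_all
            moreover have "al n0 \<le> 0" "be n0 \<le> 0" using au n0 unfolding unfriendly_def al_def be_def by auto
            ultimately have "x * al n0 + y * be n0 \<le> 0"
              by (simp add: add_nonpos_nonpos mult_nonneg_nonpos)
            then show False using g0 epsnn by linarith
          qed
        qed
      qed
    qed
    have "strong_BNE P mu Psig N (v N) (Sig N) (eps N)" for N
      unfolding strong_BNE_def using key by blast
    then show "\<exists>\<epsilon>::nat \<Rightarrow> real. \<epsilon> \<longlonglongrightarrow> 0 \<and> (\<forall>N. strong_BNE P mu Psig N (v N) (Sig N) (\<epsilon> N))"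
      using elim by blast
  next
    assume "\<exists>\<epsilon>::nat \<Rightarrow> real. \<epsilon> \<longlonglongrightarrow> 0 \<and> (\<forall>N. strong_BNE P mu Psig N (v N) (Sig N) (\<epsilon> N))"
    then obtain eps where elim: "eps \<longlonglongrightarrow> 0" and bne: "\<forall>N. strong_BNE P mu Psig N (v N) (Sig N) (eps N)" by blast
    have aC: "aC > 0" using assms(12,13,14) by linarith
    have hL: "0 \<le> Psig Sh WL" and hH: "Psig Sh WH \<le> 1" using Ps[rule_format, of WL] Ps[rule_format, of WH] by auto
    have lS: "Psig Sl w = 1 - Psig Sh w" for w using Ps by (simp add: eq_diff_eq)
    obtain qh ql where q: "0 \<le> qh" "qh \<le> 1" "0 \<le> ql" "ql \<le> 1"
      and qH: "aF + aC*(Psig Sh WH*qh + (1-Psig Sh WH)*ql) > mu"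
      and qL: "aF + aC*(Psig Sh WL*qh + (1-Psig Sh WL)*ql) < mu"
      using exists_q[of aC aF mu "Psig Sh WL" "Psig Sh WH"] aC assms(12,13,14) hL hH assms(7) by auto
    define pi where "pi w = Psig Sh w * qh + Psig Sl w * ql" for w
    have piH: "aF + aC * pi WH > mu" and piL: "aF + aC * pi WL < mu" using qH qL unfolding pi_def lS by auto
    have pi01: "0 \<le> pi w \<and> pi w \<le> 1" for w
    proof -
      have a: "Psig Sl w \<ge> 0" "Psig Sh w \<ge> 0" "Psig Sl w + Psig Sh w = 1" using Ps by auto
      have "Psig Sh w * qh \<le> Psig Sh w" "Psig Sl w * ql \<le> Psig Sl w" using a q by (simp_all add: mult_left_le)
      then show ?thesis using a q unfolding pi_def by auto
    qed
    define kap where "kap = min (aF + aC * pi WH - mu) (mu - aF - aC * pi WL)"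
    have kap: "kap > 0" unfolding kap_def using piH piL by auto
    define S' where "S' N n s = (if contingent (v N n) then (if s = Sh then qh else ql) else Sig N n s)" for N n s
    have S'v: "valid_profile N (S' N)" for N
      using valid[of N] q unfolding valid_profile_def S'_def by auto
    define Fs where "Fs N = {n. n < N \<and> friendly (v N n)}" for N
    define Us where "Us N = {n. n < N \<and> unfriendly (v N n)}" for N
    define Cs where "Cs N = {n. n < N \<and> contingent (v N n)}" for N
    have vp': "vote_prob Psig (S' N) w n = (if friendly (v N n) then 1 else 0) + (if contingent (v N n) then pi w else 0)"
      if nN: "n < N" for N w n
    proof -
      consider "friendly (v N n)" | "unfriendly (v N n)" | "contingent (v N n)" using assms(17)[rule_format, OF nN] by blast
      then show ?thesis
      proof cases
        case 1
        have nc: "\<not> contingent (v N n)" using types_disj(2) 1 by blast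
        have "S' N n Sl = 1" "S' N n Sh = 1" using fr[OF nN 1] nc unfolding S'_def by simp_all
        moreover have "Psig Sl w + Psig Sh w = 1" using Ps by blast
        ultimately show ?thesis using 1 nc unfolding vote_prob_def by simp
      next
        case 2
        have nc: "\<not> contingent (v N n)" "\<not> friendly (v N n)" using types_disj 2 by blast+
        have "S' N n Sl = 0" "S' N n Sh = 0" using un[OF nN 2] nc unfolding S'_def by simp_all
        then show ?thesis using nc unfolding vote_prob_def by simp
      next
        case 3
        have nc: "\<not> friendly (v N n)" using types_disj 3 by blast
        have "S' N n Sl = ql" "S' N n Sh = qh" using 3 unfolding S'_def by simp_all
        then show ?thesis using nc 3 unfolding vote_prob_def pi_def by (simp add: mult.commute)
      qed
    qed
    have mean: "(\<Sum>n\<in>{..<N}. vote_prob Psig (S' N) w n) = real (card (Fs N)) + pi w * real (card (Cs N))" for N w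
    proof -
      have "(\<Sum>n\<in>{..<N}. vote_prob Psig (S' N) w n) = (\<Sum>n\<in>{..<N}. (if friendly (v N n) then 1 else 0) + (if contingent (v N n) then pi w else 0))"
        using vp' by (intro sum.cong) auto
      also have "\<dots> = real (card (Fs N)) + pi w * real (card (Cs N))"
        unfolding sum.distrib sum_indic Fs_def Cs_def by simp
      finally show ?thesis .
    qed
    have cards: "real (card (Fs N)) + real (card (Us N)) + real (card (Cs N)) = real N" for N
    proof -
      have u: "{..<N} = (Fs N \<union> Us N) \<union> Cs N" using assms(17) unfolding Fs_def Us_def Cs_def by auto
      have d1: "Fs N \<inter> Us N = {}" and d2: "(Fs N \<union> Us N) \<inter> Cs N = {}"
        using types_disj unfolding Fs_def Us_def Cs_def by blast+
      have f: "finite (Fs N)" "finite (Us N)" "finite (Cs N)" unfolding Fs_def Us_def Cs_def by auto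
      have "card {..<N} = card (Fs N) + card (Us N) + card (Cs N)"
        unfolding u using f d1 d2 by (simp add: card_Un_disjoint)
      then show ?thesis by (metis card_lessThan of_nat_add)
    qed
    have flo: "real (nat \<lfloor>z\<rfloor>) \<le> z \<and> z - 1 < real (nat \<lfloor>z\<rfloor>)" if "z \<ge> 0" for z :: real
    proof -
      have "\<lfloor>z\<rfloor> \<ge> 0" using that by simp
      then have "real (nat \<lfloor>z\<rfloor>) = real_of_int \<lfloor>z\<rfloor>" by simp
      then show ?thesis by linarith
    qed
    have Fb: "real (card (Fs N)) \<le> aF * real N \<and> aF * real N - 1 < real (card (Fs N))" for N
      using flo[of "aF * real N"] assms(9,18) unfolding Fs_def by simp
    have Ub: "real (card (Us N)) \<le> aU * real N \<and> aU * real N - 1 < real (card (Us N))" for N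
      using flo[of "aU * real N"] assms(10,19) unfolding Us_def by simp
    have Cb: "aC * real N \<le> real (card (Cs N)) \<and> real (card (Cs N)) \<le> aC * real N + 2" for N
    proof -
      have "aC = 1 - aF - aU" using assms(12) by simp
      then have "aC * real N = real N - aF * real N - aU * real N" by (simp add: left_diff_distrib)
      then show ?thesis using cards[of N] Fb[of N] Ub[of N] by linarith
    qed
    have mH: "(\<Sum>n\<in>{..<N}. vote_prob Psig (S' N) WH n) \<ge> real N * (mu + kap) - 1" for N
    proof -
      have "pi WH * (aC * real N) \<le> pi WH * real (card (Cs N))" using Cb[of N] pi01 by (intro mult_left_mono) auto
      moreover have "real N * kap \<le> real N * (aF + aC * pi WH - mu)" unfolding kap_def by (intro mult_left_mono) auto
      ultimately show ?thesis unfolding mean using Fb[of N] by (simp add: algebra_simps)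
    qed
    have mL: "(\<Sum>n\<in>{..<N}. vote_prob Psig (S' N) WL n) \<le> real N * (mu - kap) + 2" for N
    proof -
      have "pi WL * real (card (Cs N)) \<le> pi WL * (aC * real N + 2)" using Cb[of N] pi01 by (intro mult_left_mono) auto
      moreover have "pi WL * 2 \<le> 2" using pi01[of WL] by simp
      moreover have "real N * (mu - aF - aC * pi WL) \<ge> real N * kap" unfolding kap_def by (intro mult_left_mono) auto
      ultimately show ?thesis unfolding mean using Fb[of N] by (simp add: algebra_simps)
    qed
    have newb: "P WL * LA N (S' N) WL + P WH * (1 - LA N (S' N) WH) \<le> 4 / (real N * kap^2)"
      if N1: "N \<ge> 1" and Nk: "real N * kap \<ge> 4" for N
    proof -
      define a where "a = real N * kap / 2"
      have a0: "a > 0" unfolding a_def using N1 kap by simp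
      have aeq: "real N / a^2 = 4 / (real N * kap^2)" unfolding a_def using N1 kap by (simp add: field_simps power2_eq_square)
      have "lam mu Psig N (S' N) WH Rej \<le> real N / a^2"
      proof (rule lam_tail[OF Ps S'v a0])
        fix c assume "(Rej = Acc) = (mu * real N \<le> c)"
        then have "c < mu * real N" by auto
        moreover have "mu * real N + a \<le> (\<Sum>n\<in>{..<N}. vote_prob Psig (S' N) WH n)"
          using mH[of N] Nk unfolding a_def by (simp add: algebra_simps)
        ultimately show "a \<le> \<bar>c - (\<Sum>n\<in>{..<N}. vote_prob Psig (S' N) WH n)\<bar>" by linarith
      qed
      moreover have "lam mu Psig N (S' N) WL Acc \<le> real N / a^2"
      proof (rule lam_tail[OF Ps S'v a0])
        fix c assume "(Acc = Acc) = (mu * real N \<le> c)"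
        then have "mu * real N \<le> c" by auto
        moreover have "(\<Sum>n\<in>{..<N}. vote_prob Psig (S' N) WL n) + a \<le> mu * real N"
          using mL[of N] Nk unfolding a_def by (simp add: algebra_simps)
        ultimately show "a \<le> \<bar>c - (\<Sum>n\<in>{..<N}. vote_prob Psig (S' N) WL n)\<bar>" by linarith
      qed
      ultimately have "LA N (S' N) WL \<le> 4 / (real N * kap^2)" "1 - LA N (S' N) WH \<le> 4 / (real N * kap^2)"
        unfolding LA_def lam_Rej aeq by auto
      then have "P WL * LA N (S' N) WL + P WH * (1 - LA N (S' N) WH) \<le> P WL * (4 / (real N * kap^2)) + P WH * (4 / (real N * kap^2))"
        using assms(3,4) by (intro add_mono mult_left_mono) auto
      also have "\<dots> = (P WL + P WH) * (4 / (real N * kap^2))" by (rule distrib_right[symmetric])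
      also have "\<dots> = 4 / (real N * kap^2)" using assms(5) by simp
      finally show ?thesis .
    qed
    have oldb: "del N \<le> real B * (P WL * LA N (S' N) WL + P WH * (1 - LA N (S' N) WH)) + \<bar>eps N\<bar>"
      if N1: "N \<ge> 1" for N
    proof (rule ccontr)
      assume big: "\<not> ?thesis"
      have Cne: "Cs N \<noteq> {}"
      proof -
        have "aC * real N > 0" using aC N1 by simp
        then have "card (Cs N) > 0" using Cb[of N] by linarith
        then show ?thesis by auto
      qed
      then obtain c where c: "c \<in> Cs N" by blast
      have r1: "0 \<le> LA N (S' N) w \<and> LA N (S' N) w \<le> 1" for w using LArange[OF S'v] by blast
      have r0: "0 \<le> LA N (Sig N) w \<and> LA N (Sig N) w \<le> 1" for w using LArange[OF valid] by blast
      have cg: "exp_util P mu Psig N (S' N) (v N n) - exp_util P mu Psig N (Sig N) (v N n) > \<bar>eps N\<bar>" if n: "n \<in> Cs N" for n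
      proof -
        have nN: "n < N" and cn: "contingent (v N n)" using n unfolding Cs_def by auto
        have "v N n WL Acc + 1 \<le> v N n WL Rej" "v N n WH Rej + 1 \<le> v N n WH Acc"
          using cn unfolding contingent_def by auto
        then have A1: "1 \<le> real (v N n WL Rej) - real (v N n WL Acc)" and b1: "1 \<le> real (v N n WH Acc) - real (v N n WH Rej)"
          by linarith+
        have AB: "real (v N n WL Rej) - real (v N n WL Acc) \<le> real B" and bB: "real (v N n WH Acc) - real (v N n WH Rej) \<le> real B"
          using vB[OF nN, of WL Rej] vB[OF nN, of WH Acc] by auto
        have "(P WL * LA N (Sig N) WL - P WL * LA N (S' N) WL) * (real (v N n WL Rej) - real (v N n WL Acc))
            + (P WH * (1 - LA N (Sig N) WH) - P WH * (1 - LA N (S' N) WH)) * (real (v N n WH Acc) - real (v N n WH Rej))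
            \<ge> P WL * LA N (Sig N) WL + P WH * (1 - LA N (Sig N) WH) - real B * (P WL * LA N (S' N) WL + P WH * (1 - LA N (S' N) WH))"
          using r0 r1 assms(3,4) A1 b1 AB bB by (intro cont_lower) auto
        moreover have "exp_util P mu Psig N (S' N) (v N n) - exp_util P mu Psig N (Sig N) (v N n)
           = (P WL * LA N (Sig N) WL - P WL * LA N (S' N) WL) * (real (v N n WL Rej) - real (v N n WL Acc))
            + (P WH * (1 - LA N (Sig N) WH) - P WH * (1 - LA N (S' N) WH)) * (real (v N n WH Acc) - real (v N n WH Rej))"
          unfolding gain by (simp add: algebra_simps)
        ultimately show ?thesis using big unfolding del_eq by linarith
      qed
      have "\<exists>D S''. D \<subseteq> {..<N} \<and> valid_profile N S'' \<and>
          (\<forall>n<N. n \<notin> D \<longrightarrow> S'' n = Sig N n) \<and>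
          (\<forall>n\<in>D. exp_util P mu Psig N S'' (v N n) \<ge> exp_util P mu Psig N (Sig N) (v N n)) \<and>
          (\<exists>n\<in>D. exp_util P mu Psig N S'' (v N n) > exp_util P mu Psig N (Sig N) (v N n) + eps N)"
      proof (intro exI conjI)
        show "Cs N \<subseteq> {..<N}" unfolding Cs_def by auto
        show "valid_profile N (S' N)" by (rule S'v)
        show "\<forall>n<N. n \<notin> Cs N \<longrightarrow> S' N n = Sig N n" unfolding Cs_def S'_def by auto
        show "\<forall>n\<in>Cs N. exp_util P mu Psig N (S' N) (v N n) \<ge> exp_util P mu Psig N (Sig N) (v N n)"
          using cg by (smt (verit) abs_ge_zero)
        show "\<exists>n\<in>Cs N. exp_util P mu Psig N (S' N) (v N n) > exp_util P mu Psig N (Sig N) (v N n) + eps N"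
          using cg[OF c] c by (smt (verit) abs_ge_self)
      qed
      then show False using bne unfolding strong_BNE_def by blast
    qed
    define M where "M = nat \<lceil>4 / kap\<rceil> + 1"
    have ev: "eventually (\<lambda>N. del N \<le> (4 * real B / kap^2) / real N + \<bar>eps N\<bar>) sequentially"
      unfolding eventually_sequentially
    proof (intro exI allI impI)
      fix N assume NM: "M \<le> N"
      then have N1: "N \<ge> 1" unfolding M_def by simp
      have "4 / kap \<le> real N" using NM unfolding M_def by linarith
      then have Nk: "real N * kap \<ge> 4" using kap by (simp add: divide_le_eq)
      have "real B * (P WL * LA N (S' N) WL + P WH * (1 - LA N (S' N) WH)) \<le> real B * (4 / (real N * kap^2))"
        using newb[OF N1 Nk] by (intro mult_left_mono) auto
      also have "\<dots> = (4 * real B / kap^2) / real N" by (simp add: field_simps)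
      finally show "del N \<le> (4 * real B / kap^2) / real N + \<bar>eps N\<bar>" using oldb[OF N1] by linarith
    qed
    have "(\<lambda>N. (4 * real B / kap^2) / real N + \<bar>eps N\<bar>) \<longlonglongrightarrow> 0 + 0"
      by (intro tendsto_add lim_const_over_n tendsto_rabs_zero elim)
    then have "del \<longlonglongrightarrow> 0"
      using ev del_nn by (intro tendsto_sandwich[of "\<lambda>_. 0" del sequentially "\<lambda>N. (4 * real B / kap^2) / real N + \<bar>eps N\<bar>" 0]) auto
    then show "(\<lambda>N. fidelity P mu Psig N (Sig N)) \<longlonglongrightarrow> 1" using lim_iff by simp
  qed
qed


end
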